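(* Let $\omega\in(0,1]$, $a\in(0,1]$, $\hat R_*>0$, and fix $j\in\mathbb{N}$, $\varepsilon_j>0$, $d_j\in(0,1/4]$, $R_j\in(\hat R_*,1]$. Suppose that the stage-$j$ Hamiltonian $H^{(j)}=\omega pq+\eta+F^{(j)}(p,q,t)$ satisfies $\|F^{(j)}(p,q,t)\|_{R_j;\mathbb{R}^+}\le\varepsilon_je^{-at}$ for all $t\in\mathbb{R}^+$, and that $$\frac{4e^2\varepsilon_j}{\omega a\hat R_*^2d_j^6}\le\frac12.$$ Set $R_{j+1}:=(1-2d_j)R_j$ and $\varepsilon_{j+1}:=\dfrac{8e^2\varepsilon_j^2}{\omega a\hat R_*^2d_j^6}$. Then the stage-$(j+1)$ perturbation satisfies $\|F^{(j+1)}(p,q,t)\|_{R_{j+1};\mathbb{R}^+}\le\varepsilon_{j+1}e^{-at}$ for all $t\in\mathbb{R}^+$.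
   Context: $\mathbb{R}^+:=[0,\infty)$; multi-indices $\underline\alpha=(\alpha_1,\alpha_2)\in\mathbb{N}^2$, $|\underline\alpha|=\alpha_1+\alpha_2$. Time-dependent Taylor norm: $\|G\|_{\rho;\mathbb{R}^+}:=\sum_{\underline\alpha}|g_{\underline\alpha}(t)|\rho^{|\underline\alpha|}$ for $G=\sum g_{\underline\alpha}(t)p^{\alpha_1}q^{\alpha_2}$. $F^{(j)}=\sum_{\underline\alpha}f^{(j)}_{\underline\alpha}(t)p^{\alpha_1}q^{\alpha_2}$ is holomorphic in $(p,q)$ for $|p|,|q|<R_j$ with continuous coefficients. The generating function $\chi^{(j)}=\sum_{\underline\alpha}c_{\underline\alpha}(t)p^{\alpha_1}q^{\alpha_2}$ is defined by: for $\hat\lambda:=\omega(\alpha_1-\alpha_2)$, $c_{\underline\alpha}$ solves $\dot c_{\underline\alpha}+\hat\lambda c_{\underline\alpha}=f^{(j)}_{\underline\alpha}$ with $c_{\underline\alpha}(0)=0$ if $\hat\lambda>0$ and $c_{\underline\alpha}(0)=-\int_0^\infty e^{\hat\lambda s}f^{(j)}_{\underline\alpha}(s)ds$ if $\hat\lambda\le0$ (so that $\{\omega pq+\eta,\chi^{(j)}\}+F^{(j)}=0$). For functions independent of $\eta$, $\mathcal{L}_\chi G:=\{G,\chi\}=\partial_qG\,\partial_p\chi-\partial_pG\,\partial_q\chi$. The next stage is $H^{(j+1)}:=\exp(\mathcal{L}_{\chi^{(j)}})H^{(j)}=\omega pq+\eta+F^{(j+1)}$ with $F^{(j+1)}:=\sum_{s\ge1}\frac{s}{(s+1)!}\mathcal{L}^s_{\chi^{(j)}}F^{(j)}$.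 *)

theory Defs
  imports "HOL-Analysis.Analysis"
begin

text \<open>A time-dependent power series in (p,q): the coefficient of p^i q^k at time t is g (i,k) t.\<close>
type_synonym tser = "nat \<times> nat \<Rightarrow> real \<Rightarrow> complex"

definition dp :: "tser \<Rightarrow> tser" where
  "dp g = (\<lambda>(i,k) t. of_nat (i+1) * g (i+1,k) t)"

definition dq :: "tser \<Rightarrow> tser" where
  "dq g = (\<lambda>(i,k) t. of_nat (k+1) * g (i,k+1) t)"

definition smul :: "tser \<Rightarrow> tser \<Rightarrow> tser" where
  "smul g h = (\<lambda>(i,k) t. \<Sum>a\<le>i. \<Sum>b\<le>k. g (a,b) t * h (i-a,k-b) t)"

text \<open>Lie derivative  L_chi G = {G,chi} = dq G * dp chi - dp G * dq chi.\<close>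
definition lie :: "tser \<Rightarrow> tser \<Rightarrow> tser" where
  "lie chi g = (\<lambda>\<alpha> t. smul (dq g) (dp chi) \<alpha> t - smul (dp g) (dq chi) \<alpha> t)"

definition next_pert :: "tser \<Rightarrow> tser \<Rightarrow> tser" where
  "next_pert chi f = (\<lambda>\<alpha> t. \<Sum>s. of_real (real s / fact (s+1)) * ((lie chi ^^ s) f) \<alpha> t)"

definition taylor_norm :: "tser \<Rightarrow> real \<Rightarrow> real \<Rightarrow> ennreal" where
  "taylor_norm g \<rho> t = (SUP S\<in>{S. finite S}. ennreal (\<Sum>\<alpha>\<in>S. norm (g \<alpha> t) * \<rho> ^ (fst \<alpha> + snd \<alpha>)))"

end

theory Submission
  imports Defs
begin


definition nb :: "tser \<Rightarrow> real \<Rightarrow> real \<Rightarrow> real \<Rightarrow> bool" where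
  "nb g \<rho> t B \<longleftrightarrow> (\<forall>S. finite S \<longrightarrow> (\<Sum>\<alpha>\<in>S. norm (g \<alpha> t) * \<rho> ^ (fst \<alpha> + snd \<alpha>)) \<le> B)"

lemma tn_iff: "0 \<le> B \<Longrightarrow> taylor_norm g \<rho> t \<le> ennreal B \<longleftrightarrow> nb g \<rho> t B"
  unfolding taylor_norm_def nb_def by (simp add: SUP_le_iff)

lemma nb_nonneg: "nb g \<rho> t B \<Longrightarrow> 0 \<le> B"
  unfolding nb_def by (metis finite.emptyI sum.empty)

lemma nb_coef: assumes "nb g \<rho> t B" "\<rho> > 0"
  shows "norm (g \<alpha> t) \<le> B / \<rho> ^ (fst \<alpha> + snd \<alpha>)"
proof -
  have "norm (g \<alpha> t) * \<rho> ^ (fst \<alpha> + snd \<alpha>) \<le> B"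
    using assms(1) unfolding nb_def by (metis (no_types, lifting) finite.emptyI finite_insert sum.insert sum.empty empty_iff add.right_neutral)
  then show ?thesis using assms(2) by (simp add: pos_le_divide_eq)
qed

lemma nb_mono: assumes "nb g r t B" "0 \<le> \<rho>" "\<rho> \<le> r" shows "nb g \<rho> t B"
  unfolding nb_def
proof (intro allI impI)
  fix S :: "(nat\<times>nat) set" assume "finite S"
  have "(\<Sum>\<alpha>\<in>S. norm (g \<alpha> t) * \<rho> ^ (fst \<alpha> + snd \<alpha>)) \<le> (\<Sum>\<alpha>\<in>S. norm (g \<alpha> t) * r ^ (fst \<alpha> + snd \<alpha>))"
    by (intro sum_mono mult_left_mono power_mono) (use assms in auto)
  also have "\<dots> \<le> B" using assms(1) \<open>finite S\<close> unfolding nb_def by blast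
  finally show "(\<Sum>\<alpha>\<in>S. norm (g \<alpha> t) * \<rho> ^ (fst \<alpha> + snd \<alpha>)) \<le> B" .
qed

lemma nb_diff: assumes "nb g \<rho> t B1" "nb h \<rho> t B2" "0 \<le> \<rho>"
  shows "nb (\<lambda>\<alpha> t. g \<alpha> t - h \<alpha> t) \<rho> t (B1 + B2)"
  unfolding nb_def
proof (intro allI impI)
  fix S :: "(nat\<times>nat) set" assume "finite S"
  have "(\<Sum>\<alpha>\<in>S. norm (g \<alpha> t - h \<alpha> t) * \<rho> ^ (fst \<alpha> + snd \<alpha>)) \<le>
     (\<Sum>\<alpha>\<in>S. norm (g \<alpha> t) * \<rho> ^ (fst \<alpha> + snd \<alpha>) + norm (h \<alpha> t) * \<rho> ^ (fst \<alpha> + snd \<alpha>))"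
    by (intro sum_mono) (metis assms(3) distrib_right mult_right_mono norm_triangle_ineq4 zero_le_power)
  also have "\<dots> \<le> B1 + B2" unfolding sum.distrib
    using assms(1,2) \<open>finite S\<close> unfolding nb_def by (meson add_mono)
  finally show "(\<Sum>\<alpha>\<in>S. norm (g \<alpha> t - h \<alpha> t) * \<rho> ^ (fst \<alpha> + snd \<alpha>)) \<le> B1 + B2" .
qed

lemma pow_deriv_ineq: assumes "0 \<le> \<rho>" "0 < \<delta>"
  shows "real (n+1) * \<rho> ^ n * \<delta> \<le> (\<rho> + \<delta>) ^ (n+1)"
proof (induction n)
  case 0 then show ?case using assms by simp
next
  case (Suc n)
  have a: "\<rho> ^ (n+1) \<le> (\<rho>+\<delta>)^(n+1)" using assms by (intro power_mono) auto
  have "real (Suc n + 1) * \<rho> ^ Suc n * \<delta> = \<rho> * (real (n+1) * \<rho> ^ n * \<delta>) + \<rho>^(n+1) * \<delta>"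
    by (simp add: algebra_simps)
  also have "\<dots> \<le> \<rho> * (\<rho> + \<delta>) ^ (n+1) + (\<rho>+\<delta>)^(n+1) * \<delta>"
  proof (rule add_mono)
    show "\<rho> * (real (n + 1) * \<rho> ^ n * \<delta>) \<le> \<rho> * (\<rho> + \<delta>) ^ (n + 1)"
      using Suc.IH assms(1) by (rule mult_left_mono)
    show "\<rho> ^ (n + 1) * \<delta> \<le> (\<rho> + \<delta>) ^ (n + 1) * \<delta>"
      using a assms(2) by (intro mult_right_mono) auto
  qed
  also have "\<dots> = (\<rho> + \<delta>) ^ (Suc n + 1)" by (simp add: algebra_simps)
  finally show ?case .
qed

lemma dp_eq: "dp g \<alpha> t = of_nat (fst \<alpha> + 1) * g (fst \<alpha> + 1, snd \<alpha>) t"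
  by (simp add: dp_def case_prod_beta)
lemma dq_eq: "dq g \<alpha> t = of_nat (snd \<alpha> + 1) * g (fst \<alpha>, snd \<alpha> + 1) t"
  by (simp add: dq_def case_prod_beta)

lemma nb_dp: assumes "nb g r t B" "0 < \<delta>" "\<delta> \<le> r"
  shows "nb (dp g) (r - \<delta>) t (B / \<delta>)"
  unfolding nb_def
proof (intro allI impI)
  fix S :: "(nat\<times>nat) set" assume S: "finite S"
  define h where "h = (\<lambda>\<alpha>::nat\<times>nat. (fst \<alpha> + 1, snd \<alpha>))"
  have inj: "inj_on h S" unfolding h_def inj_on_def by (auto simp: prod_eq_iff)
  let ?F = "\<lambda>\<beta>. norm (g \<beta> t) * r ^ (fst \<beta> + snd \<beta>)"
  have "(\<Sum>\<alpha>\<in>S. norm (dp g \<alpha> t) * (r - \<delta>) ^ (fst \<alpha> + snd \<alpha>)) \<le> (\<Sum>\<alpha>\<in>S. ?F (h \<alpha>) / \<delta>)"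
  proof (intro sum_mono)
    fix \<alpha> assume "\<alpha> \<in> S"
    obtain i k where a: "\<alpha> = (i,k)" by (cases \<alpha>)
    have 1: "real (i+1) * (r-\<delta>) ^ i * \<delta> \<le> r ^ (i+1)"
      using pow_deriv_ineq[of "r-\<delta>" \<delta> i] assms by simp
    have 2: "(r-\<delta>)^k \<le> r^k" using assms by (intro power_mono) auto
    have "real (i+1) * (r-\<delta>) ^ (i+k) \<le> r ^ (i+1+k) / \<delta>"
    proof -
      have "real (i+1) * (r-\<delta>) ^ (i+k) = (real (i+1) * (r-\<delta>) ^ i) * (r-\<delta>)^k" by (simp add: power_add)
      also have "\<dots> \<le> (r ^ (i+1) / \<delta>) * r^k"
        using 1 2 assms by (intro mult_mono) (auto simp: pos_le_divide_eq)
      also have "\<dots> = r ^ (i+1+k) / \<delta>" by (simp add: power_add)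
      finally show ?thesis .
    qed
    then have "norm (g (i+1,k) t) * (real (i+1) * (r-\<delta>) ^ (i+k)) \<le> norm (g (i+1,k) t) * (r ^ (i+1+k) / \<delta>)"
      by (intro mult_left_mono) auto
    then show "norm (dp g \<alpha> t) * (r - \<delta>) ^ (fst \<alpha> + snd \<alpha>) \<le> ?F (h \<alpha>) / \<delta>"
      unfolding a h_def dp_eq norm_mult norm_of_nat by (simp add: ac_simps)
  qed
  also have "\<dots> = (\<Sum>\<beta>\<in>h ` S. ?F \<beta>) / \<delta>"
    by (simp add: sum.reindex[OF inj] sum_divide_distrib)
  also have "\<dots> \<le> B / \<delta>"
    using assms(1,2) S unfolding nb_def by (intro divide_right_mono) auto
  finally show "(\<Sum>\<alpha>\<in>S. norm (dp g \<alpha> t) * (r - \<delta>) ^ (fst \<alpha> + snd \<alpha>)) \<le> B / \<delta>" .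
qed

lemma nb_dq: assumes "nb g r t B" "0 < \<delta>" "\<delta> \<le> r"
  shows "nb (dq g) (r - \<delta>) t (B / \<delta>)"
  unfolding nb_def
proof (intro allI impI)
  fix S :: "(nat\<times>nat) set" assume S: "finite S"
  define h where "h = (\<lambda>\<alpha>::nat\<times>nat. (fst \<alpha>, snd \<alpha> + 1))"
  have inj: "inj_on h S" unfolding h_def inj_on_def by (auto simp: prod_eq_iff)
  let ?F = "\<lambda>\<beta>. norm (g \<beta> t) * r ^ (fst \<beta> + snd \<beta>)"
  have "(\<Sum>\<alpha>\<in>S. norm (dq g \<alpha> t) * (r - \<delta>) ^ (fst \<alpha> + snd \<alpha>)) \<le> (\<Sum>\<alpha>\<in>S. ?F (h \<alpha>) / \<delta>)"
  proof (intro sum_mono)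
    fix \<alpha> assume "\<alpha> \<in> S"
    obtain i k where a: "\<alpha> = (i,k)" by (cases \<alpha>)
    have 1: "real (k+1) * (r-\<delta>) ^ k * \<delta> \<le> r ^ (k+1)"
      using pow_deriv_ineq[of "r-\<delta>" \<delta> k] assms by simp
    have 2: "(r-\<delta>)^i \<le> r^i" using assms by (intro power_mono) auto
    have "real (k+1) * (r-\<delta>) ^ (i+k) \<le> r ^ (i+(k+1)) / \<delta>"
    proof -
      have "real (k+1) * (r-\<delta>) ^ (i+k) = (real (k+1) * (r-\<delta>) ^ k) * (r-\<delta>)^i" by (simp add: power_add)
      also have "\<dots> \<le> (r ^ (k+1) / \<delta>) * r^i"
        using 1 2 assms by (intro mult_mono) (auto simp: pos_le_divide_eq)
      also have "\<dots> = r ^ (i+(k+1)) / \<delta>" by (simp add: power_add)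
      finally show ?thesis .
    qed
    then have "norm (g (i,k+1) t) * (real (k+1) * (r-\<delta>) ^ (i+k)) \<le> norm (g (i,k+1) t) * (r ^ (i+(k+1)) / \<delta>)"
      by (intro mult_left_mono) auto
    then show "norm (dq g \<alpha> t) * (r - \<delta>) ^ (fst \<alpha> + snd \<alpha>) \<le> ?F (h \<alpha>) / \<delta>"
      unfolding a h_def dq_eq norm_mult norm_of_nat by (simp add: ac_simps)
  qed
  also have "\<dots> = (\<Sum>\<beta>\<in>h ` S. ?F \<beta>) / \<delta>"
    by (simp add: sum.reindex[OF inj] sum_divide_distrib)
  also have "\<dots> \<le> B / \<delta>"
    using assms(1,2) S unfolding nb_def by (intro divide_right_mono) auto
  finally show "(\<Sum>\<alpha>\<in>S. norm (dq g \<alpha> t) * (r - \<delta>) ^ (fst \<alpha> + snd \<alpha>)) \<le> B / \<delta>" .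
qed

lemma smul_eq: "smul g h \<alpha> t = (\<Sum>a\<le>fst \<alpha>. \<Sum>b\<le>snd \<alpha>. g (a,b) t * h (fst \<alpha>-a, snd \<alpha>-b) t)"
  by (simp add: smul_def case_prod_beta)

lemma nb_smul: assumes "nb g \<rho> t B1" "nb h \<rho> t B2" "0 \<le> \<rho>"
  shows "nb (smul g h) \<rho> t (B1 * B2)"
  unfolding nb_def
proof (intro allI impI)
  fix S :: "(nat\<times>nat) set" assume S: "finite S"
  define P where "P = (\<lambda>\<alpha>. norm (g \<alpha> t) * \<rho> ^ (fst \<alpha> + snd \<alpha>))"
  define Q where "Q = (\<lambda>\<alpha>. norm (h \<alpha> t) * \<rho> ^ (fst \<alpha> + snd \<alpha>))"
  define D where "D = (\<lambda>\<alpha>::nat\<times>nat. {..fst \<alpha>} \<times> {..snd \<alpha>})"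
  define F where "F = (\<lambda>(\<alpha>::nat\<times>nat) (\<beta>::nat\<times>nat). P \<beta> * Q (fst \<alpha> - fst \<beta>, snd \<alpha> - snd \<beta>))"
  have P0: "\<And>x. 0 \<le> P x" and Q0: "\<And>x. 0 \<le> Q x" unfolding P_def Q_def using assms(3) by auto
  have step1: "norm (smul g h \<alpha> t) * \<rho> ^ (fst \<alpha> + snd \<alpha>) \<le> (\<Sum>\<beta>\<in>D \<alpha>. F \<alpha> \<beta>)" for \<alpha>
  proof -
    obtain i k where a: "\<alpha> = (i,k)" by (cases \<alpha>)
    have "norm (smul g h \<alpha> t) * \<rho> ^ (i+k) \<le>
        (\<Sum>a\<le>i. \<Sum>b\<le>k. norm (g (a,b) t * h (i-a, k-b) t)) * \<rho> ^ (i+k)"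
      unfolding smul_eq a fst_conv snd_conv using assms(3)
      by (intro mult_right_mono order.trans[OF norm_sum] sum_mono) (auto intro: norm_sum)
    also have "\<dots> = (\<Sum>a\<le>i. \<Sum>b\<le>k. F \<alpha> (a,b))"
      unfolding sum_distrib_right
    proof (intro sum.cong refl)
      fix a b assume "a \<in> {..i}" "b \<in> {..k}"
      then have "\<rho> ^ (i+k) = \<rho> ^ (a+b) * \<rho> ^ ((i-a)+(k-b))" by (simp add: power_add[symmetric])
      then show "norm (g (a,b) t * h (i-a, k-b) t) * \<rho> ^ (i+k) = F \<alpha> (a,b)"
        unfolding F_def P_def Q_def a by (simp add: norm_mult ac_simps)
    qed
    also have "\<dots> = (\<Sum>\<beta>\<in>D \<alpha>. F \<alpha> \<beta>)" unfolding D_def a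
      by (simp add: sum.cartesian_product)
    finally show ?thesis unfolding a by simp
  qed
  obtain M where M: "\<And>\<alpha>. \<alpha> \<in> S \<Longrightarrow> fst \<alpha> \<le> M \<and> snd \<alpha> \<le> M"
  proof -
    have "finite (fst ` S \<union> snd ` S)" using S by auto
    then obtain M where "\<forall>x\<in>fst ` S \<union> snd ` S. x \<le> M" using finite_nat_set_iff_bounded_le by blast
    then show ?thesis using that[of M] by (metis UnCI image_eqI)
  qed
  define A where "A = {..M} \<times> {..M}"
  define \<phi> where "\<phi> = (\<lambda>(\<alpha>::nat\<times>nat, \<beta>::nat\<times>nat). (\<beta>, (fst \<alpha> - fst \<beta>, snd \<alpha> - snd \<beta>)))"
  have inj: "inj_on \<phi> (Sigma S D)"
    unfolding inj_on_def \<phi>_def D_def by (auto simp: prod_eq_iff)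
  have sub: "\<phi> ` (Sigma S D) \<subseteq> A \<times> A"
    unfolding \<phi>_def D_def A_def using M by fastforce
  have finD: "\<And>\<alpha>. finite (D \<alpha>)" unfolding D_def by auto
  have "(\<Sum>\<alpha>\<in>S. norm (smul g h \<alpha> t) * \<rho> ^ (fst \<alpha> + snd \<alpha>)) \<le> (\<Sum>\<alpha>\<in>S. \<Sum>\<beta>\<in>D \<alpha>. F \<alpha> \<beta>)"
    by (intro sum_mono step1)
  also have "\<dots> = (\<Sum>z\<in>Sigma S D. case_prod F z)"
    using S finD by (simp add: sum.Sigma)
  also have "\<dots> = (\<Sum>z\<in>\<phi> ` (Sigma S D). P (fst z) * Q (snd z))"
    by (subst sum.reindex[OF inj]) (auto simp: F_def \<phi>_def intro!: sum.cong)
  also have "\<dots> \<le> (\<Sum>z\<in>A \<times> A. P (fst z) * Q (snd z))"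
    by (intro sum_mono2 sub) (auto simp: A_def intro: mult_nonneg_nonneg P0 Q0)
  also have "\<dots> = (\<Sum>x\<in>A. P x) * (\<Sum>y\<in>A. Q y)"
    by (simp add: sum_product sum.cartesian_product case_prod_beta)
  also have "\<dots> \<le> B1 * B2"
  proof (rule mult_mono)
    show "(\<Sum>x\<in>A. P x) \<le> B1" using assms(1) unfolding nb_def P_def A_def by auto
    show "(\<Sum>x\<in>A. Q x) \<le> B2" using assms(2) unfolding nb_def Q_def A_def by auto
    show "0 \<le> B1" using nb_nonneg[OF assms(1)] .
    show "0 \<le> (\<Sum>x\<in>A. Q x)" by (intro sum_nonneg Q0)
  qed
  finally show "(\<Sum>\<alpha>\<in>S. norm (smul g h \<alpha> t) * \<rho> ^ (fst \<alpha> + snd \<alpha>)) \<le> B1 * B2" .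
qed

lemma nb_lie: assumes "nb g r t B" "nb (dp c) (r-\<delta>) t C" "nb (dq c) (r-\<delta>) t C" "0 < \<delta>" "\<delta> \<le> r"
  shows "nb (lie c g) (r-\<delta>) t (2 * (B/\<delta>) * C)"
proof -
  have a: "nb (smul (dq g) (dp c)) (r-\<delta>) t (B/\<delta> * C)"
    using nb_smul[OF nb_dq[OF assms(1,4,5)] assms(2)] assms by simp
  have b: "nb (smul (dp g) (dq c)) (r-\<delta>) t (B/\<delta> * C)"
    using nb_smul[OF nb_dp[OF assms(1,4,5)] assms(3)] assms by simp
  show ?thesis using nb_diff[OF a b] assms unfolding lie_def by (simp add: algebra_simps)
qed

lemma nb_iter: assumes "nb f r0 t B0" "nb (dp c) r0 t C" "nb (dq c) r0 t C" "0 < \<delta>"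
    "real k * \<delta> \<le> r0"
  shows "nb ((lie c ^^ k) f) (r0 - real k * \<delta>) t (B0 * (2*C/\<delta>)^k)"
  using assms(5)
proof (induction k)
  case 0 then show ?case using assms(1) by simp
next
  case (Suc k)
  let ?r = "r0 - real k * \<delta>"
  have IH: "nb ((lie c ^^ k) f) ?r t (B0 * (2*C/\<delta>)^k)"
    using Suc.IH Suc.prems assms(4) by (simp add: algebra_simps)
  have rr: "?r - \<delta> = r0 - real (Suc k) * \<delta>" by (simp add: algebra_simps)
  have r0: "0 \<le> r0 - real (Suc k) * \<delta>" using Suc.prems by simp
  have le: "r0 - real (Suc k) * \<delta> \<le> r0" using assms(4) by simp
  have X: "nb (lie c ((lie c ^^ k) f)) (?r - \<delta>) t (2 * ((B0 * (2*C/\<delta>)^k)/\<delta>) * C)"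
    by (rule nb_lie[OF IH]) (use rr r0 le nb_mono[OF assms(2)] nb_mono[OF assms(3)] assms(4) Suc.prems in auto)
  have eq: "2 * ((B0 * (2*C/\<delta>)^k)/\<delta>) * C = B0 * (2*C/\<delta>)^Suc k" by (simp add: field_simps)
  show ?case using X unfolding eq rr by simp
qed



lemma lset: "{c::real..} \<in> sets lebesgue" by simp

lemma chi_coef:
  fixes f c :: "real \<Rightarrow> complex" and l K a \<omega> t :: real
  assumes a: "a > 0" and w: "\<omega> > 0" and K: "K \<ge> 0"
    and cont: "continuous_on {0..} f"
    and fb: "\<And>s. s \<ge> 0 \<Longrightarrow> norm (f s) \<le> K * exp (- a * s)"
    and ode: "\<And>t. t \<ge> 0 \<Longrightarrow> (c has_vector_derivative (f t - of_real l * c t)) (at t within {0..})"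
    and pos: "l > 0 \<Longrightarrow> c 0 = 0 \<and> \<omega> \<le> l"
    and nonpos: "l \<le> 0 \<Longrightarrow> c 0 = - integral {0..} (\<lambda>s. of_real (exp (l * s)) * f s)"
    and t: "t \<ge> 0"
  shows "norm (c t) \<le> K / \<omega> + K / a"
proof -
  define u where "u = (\<lambda>s. complex_of_real (exp (l * s)) * c s)"
  define g where "g = (\<lambda>s. complex_of_real (exp (l * s)) * f s)"
  have ud: "(u has_vector_derivative g x) (at x within {0..})" if "x \<ge> 0" for x
  proof -
    have e: "((\<lambda>s. complex_of_real (exp (l * s))) has_vector_derivative of_real (exp (l * x) * l)) (at x within {0..})"
      by (intro has_vector_derivative_of_real) (auto intro!: derivative_eq_intros)
    have "(u has_vector_derivative (of_real (exp (l * x)) * (f x - of_real l * c x) + of_real (exp (l * x) * l) * c x)) (at x within {0..})"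
      unfolding u_def by (rule has_vector_derivative_mult[OF e ode[OF that]])
    moreover have "of_real (exp (l * x)) * (f x - of_real l * c x) + of_real (exp (l * x) * l) * c x = g x"
      unfolding g_def by (simp add: algebra_simps)
    ultimately show ?thesis by simp
  qed
  have ftc: "(g has_integral (u t - u 0)) {0..t}"
    by (rule fundamental_theorem_of_calculus[OF t])
       (auto intro: has_vector_derivative_within_subset[OF ud])
  have u0: "u 0 = c 0" unfolding u_def by simp
  have ct: "c t = of_real (exp (-l * t)) * u t"
    unfolding u_def by (simp add: mult.assoc[symmetric] flip: of_real_mult exp_add)
  have nct: "norm (c t) = exp (-l * t) * norm (u t)" unfolding ct norm_mult by simp
  show ?thesis
  proof (cases "l > 0")
    case True
    then have c0: "c 0 = 0" and lw: "\<omega> \<le> l" using pos by auto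
    have h2: "((\<lambda>s. K * exp (l * s)) has_integral (K * exp (l * t) / l - K * exp (l * 0) / l)) {0..t}"
      by (rule fundamental_theorem_of_calculus[OF t])
         (use True in \<open>auto intro!: derivative_eq_intros simp flip: has_real_derivative_iff_has_vector_derivative\<close>)
    have "norm (u t) = norm (integral {0..t} g)" using ftc u0 c0 by (simp add: integral_unique)
    also have "\<dots> \<le> integral {0..t} (\<lambda>s. K * exp (l * s))"
    proof (rule integral_norm_bound_integral)
      show "g integrable_on {0..t}" using ftc by blast
      show "(\<lambda>s. K * exp (l * s)) integrable_on {0..t}" using h2 by blast
      fix s assume s: "s \<in> {0..t}"
      have "norm (g s) = exp (l * s) * norm (f s)" unfolding g_def norm_mult by simp
      also have "\<dots> \<le> exp (l * s) * (K * exp (-a * s))" using fb s by (intro mult_left_mono) auto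
      also have "\<dots> \<le> exp (l * s) * K" using s a K by (intro mult_left_mono) (auto intro!: mult_left_le)
      finally show "norm (g s) \<le> K * exp (l * s)" by (simp add: ac_simps)
    qed
    also have "\<dots> = K * exp (l * t) / l - K / l" using integral_unique[OF h2] by simp
    finally have "norm (c t) \<le> exp (-l * t) * (K * exp (l * t) / l - K / l)" unfolding nct
      by (intro mult_left_mono) auto
    also have "\<dots> = K / l - exp (-l * t) * K / l"
      by (simp add: field_simps exp_minus_inverse mult_exp_exp)
    also have "\<dots> \<le> K / l" using K True by simp
    also have "\<dots> \<le> K / \<omega>" using K w lw by (intro divide_left_mono) auto
    also have "\<dots> \<le> K / \<omega> + K / a" using K a by simp
    finally show ?thesis .
  next
    case False
    then have c0: "c 0 = - integral {0..} g" using nonpos unfolding g_def by simp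
    have gcont: "continuous_on {0..} g" unfolding g_def
      by (intro continuous_intros cont)
    have gint: "g integrable_on {x..}" if "x \<ge> 0" for x
    proof (rule measurable_bounded_by_integrable_imp_integrable)
      show "g \<in> borel_measurable (lebesgue_on {x..})"
        by (rule continuous_imp_measurable_on_sets_lebesgue) (use gcont that in \<open>auto intro: continuous_on_subset\<close>)
      show "(\<lambda>s. K * exp (-a * s)) integrable_on {x..}"
        using integrable_on_cmult_left[OF integrable_on_exp_minus_to_infinity[OF a, of x], where c=K] by simp
      show "{x..} \<in> sets lebesgue" by simp
      fix s assume s: "s \<in> {x..}"
      have "norm (g s) = exp (l * s) * norm (f s)" unfolding g_def norm_mult by simp
      also have "\<dots> \<le> 1 * (K * exp (-a * s))"
      proof (rule mult_mono)
        have "l * s \<le> 0" using s that False mult_nonpos_nonneg[of l s] by simp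
        then show "exp (l * s) \<le> 1" by simp
        show "norm (f s) \<le> K * exp (-a * s)" using fb[of s] s that by simp
      qed auto
      finally show "norm (g s) \<le> K * exp (-a * s)" by simp
    qed
    have split: "integral {0..} g = integral {0..t} g + integral {t..} g"
    proof -
      have U: "{0..t} \<union> {t..} = {0..}" using t by auto
      have I: "{0..t} \<inter> {t..} = {t}" using t by auto
      have "integral ({0..t} \<union> {t..}) g = integral {0..t} g + integral {t..} g"
      proof (rule integral_Un)
        show "g integrable_on {0..t}" using ftc by blast
        show "g integrable_on {t..}" using gint[OF t] .
        show "negligible ({0..t} \<inter> {t..})" unfolding I by (rule negligible_sing)
      qed
      then show ?thesis unfolding U .
    qed
    have ut: "u t = - integral {t..} g"
    proof -
      have I: "integral {0..t} g = u t - u 0" by (rule integral_unique[OF ftc])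
      have "u t = integral {0..t} g + u 0" using I by simp
      also have "\<dots> = integral {0..t} g - integral {0..} g" using u0 c0 by simp
      also have "\<dots> = - integral {t..} g" unfolding split by simp
      finally show ?thesis .
    qed
    have "norm (u t) \<le> integral {t..} (\<lambda>s. K * exp (l * t) * exp (-a * s))"
    proof -
      have h: "((\<lambda>s. K * exp (l * t) * exp (-a * s)) has_integral K * exp (l * t) * (exp (-a * t)/a)) {t..}"
        by (rule has_integral_mult_right[OF has_integral_exp_minus_to_infinity[OF a]])
      show ?thesis unfolding ut norm_minus_cancel
      proof (rule integral_norm_bound_integral)
        show "g integrable_on {t..}" using gint t by simp
        show "(\<lambda>s. K * exp (l * t) * exp (-a * s)) integrable_on {t..}" using h by blast
        fix s assume s: "s \<in> {t..}"
        have "norm (g s) = exp (l * s) * norm (f s)" unfolding g_def norm_mult by simp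
        also have "\<dots> \<le> exp (l * t) * (K * exp (-a * s))"
        proof (rule mult_mono)
          have "l * s \<le> l * t" using s False mult_left_mono_neg[of t s l] by simp
          then show "exp (l * s) \<le> exp (l * t)" by simp
          show "norm (f s) \<le> K * exp (-a * s)" using fb[of s] s t by simp
        qed auto
        finally show "norm (g s) \<le> K * exp (l * t) * exp (-a * s)" by (simp add: ac_simps)
      qed
    qed
    also have "\<dots> = K * exp (l * t) * (exp (-a * t)/a)"
      by (rule integral_unique[OF has_integral_mult_right[OF has_integral_exp_minus_to_infinity[OF a]]])
    finally have "norm (c t) \<le> exp (-l * t) * (K * exp (l * t) * (exp (-a * t)/a))" unfolding nct
      by (intro mult_left_mono) auto
    also have "\<dots> = K * exp (-a * t) / a" by (simp add: field_simps exp_minus_inverse mult_exp_exp)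
    also have "\<dots> \<le> K / a"
    proof (rule divide_right_mono)
      have "exp (-a * t) \<le> 1" using a t by simp
      then show "K * exp (-a * t) \<le> K" using K mult_left_le by blast
    qed (use a in auto)
    also have "\<dots> \<le> K / \<omega> + K / a" using K w by simp
    finally show ?thesis .
  qed
qed



lemma pow_fact_exp: "real s ^ s \<le> exp (real s) * fact s"
proof -
  have sm: "summable (\<lambda>n. real s ^ n /\<^sub>R fact n)" using exp_converges sums_summable by blast
  have "(\<Sum>n\<in>{s}. real s ^ n /\<^sub>R fact n) \<le> (\<Sum>n. real s ^ n /\<^sub>R fact n)"
    by (rule sum_le_suminf[OF sm]) auto
  also have "\<dots> = exp (real s)" using exp_converges sums_unique by metis
  finally have "real s ^ s / fact s \<le> exp (real s)" by (simp add: divide_inverse mult.commute)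
  then show ?thesis by (simp add: divide_le_eq)
qed

lemma geom_fin: fixes x :: real assumes "0 \<le> x" "x < 1" "finite I" shows "(\<Sum>i\<in>I. x ^ i) \<le> 1 / (1 - x)"
proof -
  have "(\<Sum>i\<in>I. x ^ i) \<le> (\<Sum>i. x ^ i)"
    by (rule sum_le_suminf) (use assms in auto)
  also have "\<dots> = 1 / (1 - x)" using assms by (intro suminf_geometric) auto
  finally show ?thesis .
qed

lemma nb_from_coef: assumes co: "\<And>\<alpha>. norm (g \<alpha> t) \<le> A / R ^ (fst \<alpha> + snd \<alpha>)"
  and A: "0 \<le> A" and R: "0 < R" and r: "0 \<le> r" "r < R"
  shows "nb g r t (A / (1 - r/R)^2)"
  unfolding nb_def
proof (intro allI impI)
  fix S :: "(nat\<times>nat) set" assume S: "finite S"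
  define x where "x = r / R"
  have x: "0 \<le> x" "x < 1" using R r unfolding x_def by auto
  obtain M where M: "\<And>\<alpha>. \<alpha> \<in> S \<Longrightarrow> fst \<alpha> \<le> M \<and> snd \<alpha> \<le> M"
  proof -
    have "finite (fst ` S \<union> snd ` S)" using S by auto
    then obtain M where "\<forall>x\<in>fst ` S \<union> snd ` S. x \<le> M" using finite_nat_set_iff_bounded_le by blast
    then show ?thesis using that[of M] by (metis UnCI image_eqI)
  qed
  have "(\<Sum>\<alpha>\<in>S. norm (g \<alpha> t) * r ^ (fst \<alpha> + snd \<alpha>)) \<le> (\<Sum>\<alpha>\<in>S. A * (x ^ fst \<alpha> * x ^ snd \<alpha>))"
  proof (intro sum_mono)
    fix \<alpha> assume "\<alpha> \<in> S"
    have "norm (g \<alpha> t) * r ^ (fst \<alpha> + snd \<alpha>) \<le> A / R ^ (fst \<alpha> + snd \<alpha>) * r ^ (fst \<alpha> + snd \<alpha>)"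
      using co r by (intro mult_right_mono) auto
    also have "\<dots> = A * x ^ (fst \<alpha> + snd \<alpha>)" unfolding x_def by (simp add: power_divide)
    finally show "norm (g \<alpha> t) * r ^ (fst \<alpha> + snd \<alpha>) \<le> A * (x ^ fst \<alpha> * x ^ snd \<alpha>)"
      by (simp add: power_add)
  qed
  also have "\<dots> = A * (\<Sum>\<alpha>\<in>S. x ^ fst \<alpha> * x ^ snd \<alpha>)" by (simp add: sum_distrib_left)
  also have "\<dots> \<le> A * (\<Sum>\<alpha>\<in>{..M}\<times>{..M}. x ^ fst \<alpha> * x ^ snd \<alpha>)"
    using M x A by (intro mult_left_mono sum_mono2) auto
  also have "\<dots> = A * ((\<Sum>i\<le>M. x ^ i) * (\<Sum>k\<le>M. x ^ k))"
    by (simp add: sum_product sum.cartesian_product case_prod_beta)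
  also have "\<dots> \<le> A * ((1/(1-x)) * (1/(1-x)))"
    using geom_fin[OF x] x A by (intro mult_left_mono mult_mono) (auto intro: sum_nonneg)
  also have "\<dots> = A / (1 - r/R)^2" unfolding x_def by (simp add: power2_eq_square)
  finally show "(\<Sum>\<alpha>\<in>S. norm (g \<alpha> t) * r ^ (fst \<alpha> + snd \<alpha>)) \<le> A / (1 - r/R)^2" .
qed



theorem lemma3:
  fixes \<omega> a Rstar eps d R :: real and f c :: tser
  assumes "0 < \<omega>" "\<omega> \<le> 1" "0 < a" "a \<le> 1" "0 < Rstar"
    and "0 < eps" "0 < d" "d \<le> 1/4" "Rstar < R" "R \<le> 1"
    and cont: "\<And>\<alpha>. continuous_on {0..} (f \<alpha>)"
    and bound: "\<And>t. t \<ge> 0 \<Longrightarrow> taylor_norm f R t \<le> ennreal (eps * exp (- a * t))"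
    and small: "4 * exp 2 * eps / (\<omega> * a * Rstar\<^sup>2 * d ^ 6) \<le> 1/2"
    and ode: "\<And>\<alpha> t. t \<ge> 0 \<Longrightarrow>
       (c \<alpha> has_vector_derivative
          (f \<alpha> t - of_real (\<omega> * (real (fst \<alpha>) - real (snd \<alpha>))) * c \<alpha> t)) (at t within {0..})"
    and init_pos: "\<And>\<alpha>. \<omega> * (real (fst \<alpha>) - real (snd \<alpha>)) > 0 \<Longrightarrow> c \<alpha> 0 = 0"
    and init_nonpos: "\<And>\<alpha>. \<omega> * (real (fst \<alpha>) - real (snd \<alpha>)) \<le> 0 \<Longrightarrow>
       c \<alpha> 0 = - integral {0..}
          (\<lambda>s. of_real (exp (\<omega> * (real (fst \<alpha>) - real (snd \<alpha>)) * s)) * f \<alpha> s)"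
  shows "(\<forall>\<alpha> t. t \<ge> 0 \<longrightarrow>
            summable (\<lambda>s. of_real (real s / fact (s+1)) * ((lie c ^^ s) f) \<alpha> t))
       \<and> (\<forall>t\<ge>0. taylor_norm (next_pert c f) ((1 - 2*d) * R) t
              \<le> ennreal (8 * exp 2 * eps\<^sup>2 / (\<omega> * a * Rstar\<^sup>2 * d ^ 6) * exp (- a * t)))"
proof -
  note w0 = assms(1) and w1 = assms(2) and a0 = assms(3) and a1 = assms(4) and Rs0 = assms(5)
    and e0 = assms(6) and d0 = assms(7) and d1 = assms(8) and RsR = assms(9) and R1 = assms(10)
  define w where "w = (\<lambda>s::nat. real s / fact (s+1))"
  define L where "L = (\<lambda>s. (lie c ^^ s) f)"
  define \<rho> where "\<rho> = (1 - 2*d) * R"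
  define r0 where "r0 = (1 - d) * R"
  define r1 where "r1 = (1 - d/2) * R"
  define A where "A = 2 * eps / (\<omega> * a)"
  define Bchi where "Bchi = A / (1 - r1/R)^2"
  define C where "C = Bchi / (d*R/2)"
  define q1 where "q1 = 2*C/(d*R)"
  define Q where "Q = exp 1 * q1"
  define qp where "qp = 4 * exp 2 * eps / (\<omega> * a * Rstar\<^sup>2 * d ^ 6)"
  have R0: "0 < R" using Rs0 RsR by simp
  have rho0: "0 < \<rho>" unfolding \<rho>_def using d1 R0 by simp
  have A0: "0 \<le> A" unfolding A_def using e0 w0 a0 by simp
  have Qeq: "Q = 32 * exp 1 * eps / (\<omega> * a * d^4 * R^2)"
    unfolding Q_def q1_def C_def Bchi_def r1_def A_def using R0 d0
    by (simp add: field_simps power2_eq_square power4_eq_xxxx)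
  have Q0: "0 \<le> Q" unfolding Qeq using e0 w0 a0 d0 R0 by simp
  have Qle: "Q \<le> qp / 4"
  proof -
    have e2: "exp (2::real) = exp 1 * exp 1" by (simp flip: exp_add)
    have ege: "2 \<le> exp (1::real)" using exp_ge_add_one_self[of 1] by simp
    have dd: "d^2 \<le> 1/16" using d0 d1 unfolding power2_eq_square
      using mult_mono[of d "1/4" d "1/4"] by simp
    have rr: "Rstar^2 \<le> R^2" using Rs0 RsR by (intro power_mono) auto
    have key: "32 * d^2 * Rstar^2 \<le> exp 1 * R^2"
    proof -
      have "32 * d^2 * Rstar^2 \<le> 32 * (1/16) * R^2"
        using dd rr by (intro mult_mono) auto
      also have "\<dots> = 2 * R^2" by simp
      also have "\<dots> \<le> exp 1 * R^2" using ege by (intro mult_right_mono) auto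
      finally show ?thesis .
    qed
    define X where "X = exp 1 * eps / (\<omega> * a * d^6 * R^2 * Rstar^2)"
    have X0: "0 \<le> X" unfolding X_def using e0 w0 a0 d0 R0 Rs0 by simp
    have "Q = (32 * d^2 * Rstar^2) * X" unfolding Qeq X_def using d0 R0 Rs0 w0 a0
      by (simp add: field_simps)
    also have "\<dots> \<le> (exp 1 * R^2) * X" using key X0 by (rule mult_right_mono)
    also have "\<dots> = qp / 4" unfolding X_def qp_def e2 using d0 R0 Rs0 w0 a0
      by (simp add: field_simps)
    finally show ?thesis .
  qed
  have qp_le: "qp \<le> 1/2" using small unfolding qp_def .
  have Qh: "Q \<le> 1/2" using Qle qp_le by simp
  have fnb: "nb f R t (eps * exp (- a * t))" if "t \<ge> 0" for t
    using bound[OF that] tn_iff[of "eps * exp (- a * t)"] e0 by simp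
  have chi: "nb c r1 t Bchi" if t: "t \<ge> 0" for t
    unfolding Bchi_def
  proof (rule nb_from_coef[OF _ A0 R0])
    show "0 \<le> r1" "r1 < R" unfolding r1_def using d0 d1 R0 by auto
    fix \<alpha> :: "nat \<times> nat"
    define l where "l = \<omega> * (real (fst \<alpha>) - real (snd \<alpha>))"
    define K where "K = eps / R ^ (fst \<alpha> + snd \<alpha>)"
    have K0: "0 \<le> K" unfolding K_def using e0 R0 by simp
    have "norm (c \<alpha> t) \<le> K / \<omega> + K / a"
    proof (rule chi_coef[OF a0 w0 K0 cont[of \<alpha>], of "c \<alpha>" l])
      show "norm (f \<alpha> s) \<le> K * exp (- a * s)" if "s \<ge> 0" for s
        using nb_coef[OF fnb[OF that] R0, of \<alpha>] unfolding K_def by simp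
      show "(c \<alpha> has_vector_derivative f \<alpha> s - of_real l * c \<alpha> s) (at s within {0..})" if "s \<ge> 0" for s
        using ode[OF that, of \<alpha>] unfolding l_def .
      show "c \<alpha> 0 = 0 \<and> \<omega> \<le> l" if "l > 0"
      proof
        show "c \<alpha> 0 = 0" using init_pos that unfolding l_def by blast
        have "real (snd \<alpha>) < real (fst \<alpha>)" using that w0 unfolding l_def
          by (simp add: zero_less_mult_iff)
        then have "Suc (snd \<alpha>) \<le> fst \<alpha>" by simp
        then have "real (Suc (snd \<alpha>)) \<le> real (fst \<alpha>)" by (simp only: of_nat_le_iff)
        then have "1 \<le> real (fst \<alpha>) - real (snd \<alpha>)" by simp
        then show "\<omega> \<le> l" unfolding l_def using w0 mult_left_mono[of 1 _ \<omega>] by simp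
      qed
      show "c \<alpha> 0 = - integral {0..} (\<lambda>s. of_real (exp (l * s)) * f \<alpha> s)" if "l \<le> 0"
        using init_nonpos[of \<alpha>] that unfolding l_def by simp
    qed (use t in auto)
    also have "\<dots> \<le> K / (\<omega>*a) + K / (\<omega>*a)"
    proof (rule add_mono)
      show "K / \<omega> \<le> K / (\<omega>*a)" using K0 w0 a0 a1 by (intro divide_left_mono) (auto simp: mult_le_cancel_left1)
      show "K / a \<le> K / (\<omega>*a)" using K0 w0 a0 w1 by (intro divide_left_mono) (auto simp: mult_le_cancel_right1)
    qed
    also have "\<dots> = A / R ^ (fst \<alpha> + snd \<alpha>)" unfolding A_def K_def by simp
    finally show "norm (c \<alpha> t) \<le> A / R ^ (fst \<alpha> + snd \<alpha>)" .
  qed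
  have r1r0: "r1 - d*R/2 = r0" unfolding r1_def r0_def by (simp add: algebra_simps)
  have dR0: "0 < d*R/2" using d0 R0 by simp
  have dRr1: "d*R/2 \<le> r1" unfolding r1_def using d0 d1 R0 by (simp add: field_simps)
  have dpc: "nb (dp c) r0 t C" and dqc: "nb (dq c) r0 t C" if "t \<ge> 0" for t
    using nb_dp[OF chi[OF that] dR0 dRr1] nb_dq[OF chi[OF that] dR0 dRr1] unfolding r1r0 C_def by auto
  have Lb: "nb (L s) \<rho> t (eps * exp (- a * t) * (real s * q1)^s)" if t: "t \<ge> 0" for s t
  proof (cases "s = 0")
    case True
    then show ?thesis unfolding L_def using nb_mono[OF fnb[OF t], of \<rho>] rho0 d0 R0
      unfolding \<rho>_def by (simp add: mult_le_cancel_right1)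
  next
    case False
    define \<delta> where "\<delta> = d*R / real s"
    have del0: "0 < \<delta>" unfolding \<delta>_def using False d0 R0 by simp
    have sd: "real s * \<delta> = d * R" unfolding \<delta>_def using False by simp
    have le: "real s * \<delta> \<le> r0" unfolding sd r0_def using d1 R0 by (simp add: mult_le_cancel_right1)
    have f0: "nb f r0 t (eps * exp (- a * t))"
      using nb_mono[OF fnb[OF t], of r0] d0 d1 R0 unfolding r0_def by (simp add: mult_le_cancel_right1)
    have "nb ((lie c ^^ s) f) (r0 - real s * \<delta>) t (eps * exp (- a * t) * (2*C/\<delta>)^s)"
      by (rule nb_iter[OF f0 dpc[OF t] dqc[OF t] del0 le])
    moreover have "r0 - real s * \<delta> = \<rho>" unfolding sd r0_def \<rho>_def by (simp add: algebra_simps)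
    moreover have "2*C/\<delta> = real s * q1" unfolding \<delta>_def q1_def using False d0 R0 by (simp add: field_simps)
    ultimately show ?thesis unfolding L_def by simp
  qed
  have wb: "w s * (eps * exp (- a * t) * (real s * q1)^s) \<le> eps * exp (- a * t) * (2 * Q * (1/2)^s)" for s t
  proof (cases "s = 0")
    case True then show ?thesis unfolding w_def using e0 Q0 by simp
  next
    case False
    have q10: "0 \<le> q1" using Q0 unfolding Q_def by (simp add: zero_le_mult_iff)
    have "w s * (real s * q1)^s = w s * real s ^ s * q1^s" by (simp add: power_mult_distrib)
    also have "\<dots> \<le> w s * (exp (real s) * fact s) * q1^s"
      unfolding w_def using pow_fact_exp[of s] q10 by (intro mult_right_mono mult_left_mono) auto
    also have "\<dots> = (real s / real (s+1)) * (exp 1 * q1)^s"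
    proof -
      have ex: "exp (real s) = exp 1 ^ s" using exp_of_nat_mult[of s 1] by simp
      have fs: "(fact (s+1) :: real) = real (s+1) * fact s" by simp
      have fp: "(fact s :: real) > 0" by simp
      show ?thesis unfolding w_def ex fs using fp by (simp add: power_mult_distrib divide_simps)
    qed
    also have "\<dots> \<le> 1 * Q^s" unfolding Q_def using Q0 unfolding Q_def
      by (intro mult_right_mono) auto
    also have "\<dots> \<le> 2 * Q * (1/2)^s"
    proof -
      obtain m where m: "s = Suc m" using False not0_implies_Suc by blast
      have "Q^m \<le> (1/2)^m" using Q0 Qh by (intro power_mono) auto
      then have "Q * Q^m \<le> Q * (1/2)^m" using Q0 by (intro mult_left_mono) auto
      then show ?thesis unfolding m by simp
    qed
    finally have "w s * (real s * q1)^s \<le> 2 * Q * (1/2)^s" .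
    then have "(eps * exp (- a * t)) * (w s * (real s * q1)^s) \<le> (eps * exp (- a * t)) * (2 * Q * (1/2)^s)"
      using e0 by (intro mult_left_mono) auto
    then show ?thesis by (simp add: ac_simps)
  qed
  define aa where "aa = (\<lambda>\<alpha> t s. complex_of_real (w s) * L s \<alpha> t)"
  have w0': "0 \<le> w s" for s unfolding w_def by simp
  have main: "summable (\<lambda>s. norm (aa \<alpha> t s) * \<rho> ^ (fst \<alpha> + snd \<alpha>))
      \<and> (\<forall>S. finite S \<longrightarrow> (\<Sum>\<alpha>\<in>S. (\<Sum>s. norm (aa \<alpha> t s) * \<rho> ^ (fst \<alpha> + snd \<alpha>))) \<le> eps * exp (- a * t) * (2 * Q * 2))"
    if t: "t \<ge> 0" for \<alpha> t
  proof -
    define b where "b = (\<lambda>s::nat. eps * exp (- a * t) * (2 * Q * (1/2)^s))"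
    have bs: "summable b" unfolding b_def by (intro summable_mult) auto
    have bsum: "(\<Sum>s. b s) = eps * exp (- a * t) * (2 * Q * 2)"
      unfolding b_def by (simp add: suminf_mult suminf_geometric)
    have termS: "(\<Sum>\<beta>\<in>S. norm (aa \<beta> t s) * \<rho> ^ (fst \<beta> + snd \<beta>)) \<le> b s" if S: "finite S" for S s
    proof -
      have "(\<Sum>\<beta>\<in>S. norm (aa \<beta> t s) * \<rho> ^ (fst \<beta> + snd \<beta>)) = w s * (\<Sum>\<beta>\<in>S. norm (L s \<beta> t) * \<rho> ^ (fst \<beta> + snd \<beta>))"
        unfolding aa_def norm_mult using w0'[of s] by (simp add: sum_distrib_left ac_simps)
      also have "\<dots> \<le> w s * (eps * exp (- a * t) * (real s * q1)^s)"
        using Lb[OF t, of s] S w0'[of s] unfolding nb_def by (intro mult_left_mono) auto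
      also have "\<dots> \<le> b s" unfolding b_def by (rule wb)
      finally show ?thesis .
    qed
    have term1: "norm (norm (aa \<alpha> t s) * \<rho> ^ (fst \<alpha> + snd \<alpha>)) \<le> b s" for s
      using termS[of "{\<alpha>}" s] rho0 by simp
    have sm: "summable (\<lambda>s. norm (aa \<alpha>' t s) * \<rho> ^ (fst \<alpha>' + snd \<alpha>'))" for \<alpha>'
      using termS[of "{\<alpha>'}"] rho0 by (intro summable_comparison_test'[OF bs, where N=0]) simp
    show ?thesis
    proof (intro conjI allI impI)
      show "summable (\<lambda>s. norm (aa \<alpha> t s) * \<rho> ^ (fst \<alpha> + snd \<alpha>))" by (rule sm)
      fix S :: "(nat\<times>nat) set" assume S: "finite S"
      have "(\<Sum>\<beta>\<in>S. (\<Sum>s. norm (aa \<beta> t s) * \<rho> ^ (fst \<beta> + snd \<beta>)))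
          = (\<Sum>s. \<Sum>\<beta>\<in>S. norm (aa \<beta> t s) * \<rho> ^ (fst \<beta> + snd \<beta>))"
        by (rule suminf_sum[symmetric]) (rule sm)
      also have "\<dots> \<le> (\<Sum>s. b s)"
        by (intro suminf_le termS S bs summable_sum sm)
      also have "\<dots> = eps * exp (- a * t) * (2 * Q * 2)" by (rule bsum)
      finally show "(\<Sum>\<beta>\<in>S. (\<Sum>s. norm (aa \<beta> t s) * \<rho> ^ (fst \<beta> + snd \<beta>))) \<le> eps * exp (- a * t) * (2 * Q * 2)" .
    qed
  qed
  have smn: "summable (\<lambda>s. norm (aa \<alpha> t s))" if "t \<ge> 0" for \<alpha> t
  proof -
    have "summable (\<lambda>s. norm (aa \<alpha> t s) * \<rho> ^ (fst \<alpha> + snd \<alpha>) / \<rho> ^ (fst \<alpha> + snd \<alpha>))"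
      using main[OF that, of \<alpha>] by (intro summable_divide) auto
    then show ?thesis using rho0 by simp
  qed
  show ?thesis
  proof (intro conjI allI impI)
    fix \<alpha> and t :: real assume t: "t \<ge> 0"
    show "summable (\<lambda>s. of_real (real s / fact (s+1)) * ((lie c ^^ s) f) \<alpha> t)"
      using summable_norm_cancel[OF smn[OF t, of \<alpha>]] unfolding aa_def w_def L_def .
  next
    fix t :: real assume t: "t \<ge> 0"
    have tgt: "8 * exp 2 * eps\<^sup>2 / (\<omega> * a * Rstar\<^sup>2 * d ^ 6) * exp (- a * t) = 2 * qp * (eps * exp (- a * t))"
      unfolding qp_def by (simp add: power2_eq_square field_simps)
    have np: "next_pert c f \<alpha> t = (\<Sum>s. aa \<alpha> t s)" for \<alpha>
      unfolding next_pert_def aa_def w_def L_def by simp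
    have "nb (next_pert c f) \<rho> t (2 * qp * (eps * exp (- a * t)))"
      unfolding nb_def
    proof (intro allI impI)
      fix S :: "(nat\<times>nat) set" assume S: "finite S"
      have "(\<Sum>\<alpha>\<in>S. norm (next_pert c f \<alpha> t) * \<rho> ^ (fst \<alpha> + snd \<alpha>))
          \<le> (\<Sum>\<alpha>\<in>S. (\<Sum>s. norm (aa \<alpha> t s)) * \<rho> ^ (fst \<alpha> + snd \<alpha>))"
        unfolding np using rho0 by (intro sum_mono mult_right_mono summable_norm smn[OF t]) auto
      also have "\<dots> = (\<Sum>\<alpha>\<in>S. (\<Sum>s. norm (aa \<alpha> t s) * \<rho> ^ (fst \<alpha> + snd \<alpha>)))"
        by (intro sum.cong refl suminf_mult2 smn[OF t])
      also have "\<dots> \<le> eps * exp (- a * t) * (2 * Q * 2)" using main[OF t] S by blast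
      also have "\<dots> \<le> eps * exp (- a * t) * qp" using Qle e0 by (intro mult_left_mono) auto
      also have "\<dots> \<le> 2 * qp * (eps * exp (- a * t))" using e0 Qle Q0 by simp
      finally show "(\<Sum>\<alpha>\<in>S. norm (next_pert c f \<alpha> t) * \<rho> ^ (fst \<alpha> + snd \<alpha>)) \<le> 2 * qp * (eps * exp (- a * t))" .
    qed
    moreover have "0 \<le> 2 * qp * (eps * exp (- a * t))" using Qle Q0 e0 by simp
    ultimately show "taylor_norm (next_pert c f) ((1 - 2*d) * R) t
              \<le> ennreal (8 * exp 2 * eps\<^sup>2 / (\<omega> * a * Rstar\<^sup>2 * d ^ 6) * exp (- a * t))"
      unfolding tgt \<rho>_def using tn_iff by blast
  qed
qed


end
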